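(* For positive integers $M_1,N_1,M_2,N_2$, let $\mathcal{O}(M_1,N_1,M_2,N_2)$ denote the set of $(d_1,d_2)\in\mathbb{R}_+^2$ satisfying $$d_i\le\min(M_i,N_i),\ i=1,2,\qquad d_1+\frac{\min(N_1,N_2,M_2)}{\min(N_2,M_2)}\,d_2\le\min(M_1+M_2,N_1).$$ Then $\mathcal{O}(M_1,N_1,M_2,N_2)=\mathcal{O}\big(M_1,N_1,\min(M_2,N_2),\min(M_2,N_2)\big)$.
   Context: The set $\mathcal{O}(M_1,N_1,M_2,N_2)$ is the DoF outer region of a two-user MIMO Z interference channel without channel state information at the transmitters, with $M_i$ transmit and $N_i$ receive antennas at user $i$. *)

theory Defs
  imports Complex_Main
begin

definition Oregion :: "nat \<Rightarrow> nat \<Rightarrow> nat \<Rightarrow> nat \<Rightarrow> (real \<times> real) set" where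
  "Oregion M1 N1 M2 N2 = {(d1, d2). d1 \<ge> 0 \<and> d2 \<ge> 0 \<and>
      d1 \<le> real (min M1 N1) \<and> d2 \<le> real (min M2 N2) \<and>
      d1 + (real (min N1 (min N2 M2)) / real (min N2 M2)) * d2 \<le> real (min (M1 + M2) N1)}"

end

theory Submission
  imports Defs
begin

theorem lemma6:
  fixes M1 N1 M2 N2 :: nat
  assumes "M1 > 0" "N1 > 0" "M2 > 0" "N2 > 0"
  shows "Oregion M1 N1 M2 N2 = Oregion M1 N1 (min M2 N2) (min M2 N2)"
proof -
  define m where "m = min M2 N2"
  have mpos: "m > 0" using assms by (simp add: m_def)
  have mm: "min m m = m" "min N2 M2 = m" by (auto simp: m_def)
  have key: "d1 + (real (min N1 m) / real m) * d2 \<le> real (min M1 N1) + real (min N1 m)"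
    if "d1 \<le> real (min M1 N1)" "d2 \<le> real m" "d2 \<ge> 0" for d1 d2 :: real
  proof -
    have "(real (min N1 m) / real m) * d2 \<le> (real (min N1 m) / real m) * real m"
      using that by (intro mult_left_mono) auto
    also have "\<dots> = real (min N1 m)" using mpos by simp
    finally show ?thesis using that by linarith
  qed
  have eqv: "(d1 + (real (min N1 m) / real m) * d2 \<le> real (min (M1 + M2) N1)) =
             (d1 + (real (min N1 m) / real m) * d2 \<le> real (min (M1 + m) N1))"
    if "d1 \<le> real (min M1 N1)" "d2 \<le> real m" "d2 \<ge> 0" for d1 d2 :: real
  proof (cases "M2 \<le> N2")
    case True then show ?thesis by (simp add: m_def)
  next
    case False
    hence m: "m = N2" by (simp add: m_def)
    have k: "d1 + (real (min N1 m) / real m) * d2 \<le> real (min M1 N1) + real (min N1 m)"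
      using key that by blast
    show ?thesis
    proof (cases "N1 \<le> M1 + N2")
      case True then show ?thesis using False m by simp
    next
      case F2: False
      have "real (min M1 N1) + real (min N1 m) \<le> real (min (M1 + M2) N1)"
        "real (min M1 N1) + real (min N1 m) \<le> real (min (M1 + m) N1)"
        using F2 False m by auto
      then show ?thesis using k by linarith
    qed
  qed
  show ?thesis
    unfolding Oregion_def mm m_def[symmetric]
    using eqv by auto
qed

end
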